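(* Let $N\ge 2$ and $0<\gamma_1\le\gamma_2\le\dots\le\gamma_N$. Among the spanning trees $T$ on $\{1,\dots,N\}$ that maximize $\rho(T)$, there is one in which vertex $1$ has exactly one neighbor, namely vertex $2$.
   Context: For distinct $i,j$ put $\varphi(i,j)=\log_2\!\big(\gamma_i+\frac{\gamma_i}{\gamma_i+\gamma_j}\big)$. For a spanning tree $T$ on $\{1,\dots,N\}$ define $\rho(T)=\min\{\varphi(i,j): \{i,j\}\in E(T),\ \gamma_i\le\gamma_j\}$ (equivalently the minimum of $\varphi(i,j)$ over all ordered pairs $(i,j)$ with $\{i,j\}\in E(T)$). *)

theory Defs
  imports Complex_Main
begin

definition is_graph :: "nat \<Rightarrow> nat set set \<Rightarrow> bool" where
  "is_graph N E \<longleftrightarrow> (\<forall>e\<in>E. \<exists>i j. e = {i, j} \<and> i \<noteq> j \<and> i \<in> {1..N} \<and> j \<in> {1..N})"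

definition adj :: "nat set set \<Rightarrow> (nat \<times> nat) set" where
  "adj E = {(i, j). {i, j} \<in> E \<and> i \<noteq> j}"

definition connected_graph :: "nat \<Rightarrow> nat set set \<Rightarrow> bool" where
  "connected_graph N E \<longleftrightarrow> (\<forall>i\<in>{1..N}. \<forall>j\<in>{1..N}. (i, j) \<in> (adj E)\<^sup>*)"

definition is_cycle :: "nat set set \<Rightarrow> nat list \<Rightarrow> bool" where
  "is_cycle E vs \<longleftrightarrow> length vs \<ge> 3 \<and> distinct vs
     \<and> (\<forall>k < length vs - 1. {vs ! k, vs ! Suc k} \<in> E)
     \<and> {last vs, hd vs} \<in> E"

definition acyclic_graph :: "nat set set \<Rightarrow> bool" where
  "acyclic_graph E \<longleftrightarrow> \<not> (\<exists>vs. is_cycle E vs)"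

definition spanning_tree :: "nat \<Rightarrow> nat set set \<Rightarrow> bool" where
  "spanning_tree N T \<longleftrightarrow> is_graph N T \<and> connected_graph N T \<and> acyclic_graph T"

definition phi :: "(nat \<Rightarrow> real) \<Rightarrow> nat \<Rightarrow> nat \<Rightarrow> real" where
  "phi \<gamma> i j = log 2 (\<gamma> i + \<gamma> i / (\<gamma> i + \<gamma> j))"

definition rho :: "(nat \<Rightarrow> real) \<Rightarrow> nat set set \<Rightarrow> real" where
  "rho \<gamma> T = Min {phi \<gamma> i j | i j. {i, j} \<in> T \<and> i \<noteq> j}"

end

theory Submission
  imports Defs
begin

lemma adj_sym: "(a,b) \<in> (adj E)\<^sup>* \<Longrightarrow> (b,a) \<in> (adj E)\<^sup>*"
proof -
  have "sym (adj E)" unfolding adj_def sym_def by (auto simp: insert_commute)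
  hence "sym ((adj E)\<^sup>*)" by (rule sym_rtrancl)
  thus "(a,b) \<in> (adj E)\<^sup>* \<Longrightarrow> (b,a) \<in> (adj E)\<^sup>*" by (meson symD)
qed

lemma is_graph_sub: "is_graph N E \<Longrightarrow> E' \<subseteq> E \<Longrightarrow> is_graph N E'"
  unfolding is_graph_def by blast

lemma is_graph_finite: "is_graph N E \<Longrightarrow> E \<subseteq> Pow {1..N}"
  unfolding is_graph_def by fastforce

lemma cycle_remove:
  assumes conn: "connected_graph N E" and cyc: "is_cycle E vs"
  shows "connected_graph N (E - {{last vs, hd vs}})"
proof -
  define E' where "E' = E - {{last vs, hd vs}}"
  define n where "n = length vs"
  have n3: "n \<ge> 3" and dist: "distinct vs"
    and steps: "\<And>k. k < n - 1 \<Longrightarrow> {vs ! k, vs ! Suc k} \<in> E"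
    and lasthd: "{last vs, hd vs} \<in> E"
    using cyc unfolding is_cycle_def n_def by auto
  have ne: "vs \<noteq> []" using n3 n_def by auto
  have lst: "last vs = vs ! (n-1)" using ne n_def by (simp add: last_conv_nth)
  have hd0: "hd vs = vs ! 0" using ne by (simp add: hd_conv_nth)
  have stepsE': "{vs ! k, vs ! Suc k} \<in> E'" if k: "k < n - 1" for k
  proof -
    have "{vs ! k, vs ! Suc k} \<noteq> {vs ! (n-1), vs ! 0}"
    proof
      assume eq: "{vs ! k, vs ! Suc k} = {vs ! (n-1), vs ! 0}"
      have "vs ! k \<in> {vs ! (n-1), vs ! 0}" using eq by blast
      moreover have "vs ! k \<noteq> vs ! (n-1)"
        using nth_eq_iff_index_eq[OF dist, of k "n-1"] k n3 unfolding n_def by simp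
      ultimately have "vs ! k = vs ! 0" by blast
      moreover have "k < n" "0 < n" using k n3 by auto
      ultimately have k0: "k = 0" using nth_eq_iff_index_eq[OF dist, of k 0] unfolding n_def by simp
      have "vs ! 1 \<in> {vs ! (n-1), vs ! 0}" using eq k0 by auto
      moreover have "vs ! 1 \<noteq> vs ! (n-1)"
        using nth_eq_iff_index_eq[OF dist, of 1 "n-1"] n3 unfolding n_def by simp
      moreover have "vs ! 1 \<noteq> vs ! 0"
        using nth_eq_iff_index_eq[OF dist, of 1 0] n3 unfolding n_def by force
      ultimately show False by blast
    qed
    thus ?thesis using steps[OF k] lst hd0 E'_def by auto
  qed
  have path: "k < n \<Longrightarrow> (vs ! 0, vs ! k) \<in> (adj E')\<^sup>*" for k
  proof (induction k)
    case 0 then show ?case by simp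
  next
    case (Suc k)
    hence IH: "(vs ! 0, vs ! k) \<in> (adj E')\<^sup>*" by simp
    have "k < n - 1" using Suc by simp
    hence "{vs ! k, vs ! Suc k} \<in> E'" by (rule stepsE')
    moreover have "vs ! k \<noteq> vs ! Suc k"
      using nth_eq_iff_index_eq[OF dist, of k "Suc k"] Suc.prems unfolding n_def by simp
    ultimately have "(vs ! k, vs ! Suc k) \<in> adj E'" unfolding adj_def by simp
    thus ?case using IH by (meson rtrancl_into_rtrancl)
  qed
  have hl: "(hd vs, last vs) \<in> (adj E')\<^sup>*" using path[of "n-1"] n3 lst hd0 by simp
  have lh: "(last vs, hd vs) \<in> (adj E')\<^sup>*" using adj_sym[OF hl] .
  have sub: "adj E \<subseteq> (adj E')\<^sup>*"
  proof
    fix p assume "p \<in> adj E"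
    then obtain a b where p: "p = (a,b)" and ab: "{a,b} \<in> E" "a \<noteq> b"
      unfolding adj_def by auto
    show "p \<in> (adj E')\<^sup>*"
    proof (cases "{a,b} = {last vs, hd vs}")
      case True
      hence "(a = last vs \<and> b = hd vs) \<or> (a = hd vs \<and> b = last vs)"
        by (metis doubleton_eq_iff)
      thus ?thesis using p hl lh by auto
    next
      case False
      hence "(a,b) \<in> adj E'" using ab unfolding adj_def E'_def by auto
      thus ?thesis using p by auto
    qed
  qed
  have "(adj E)\<^sup>* \<subseteq> (adj E')\<^sup>*" using sub by (rule rtrancl_subset_rtrancl)
  thus ?thesis using conn unfolding connected_graph_def E'_def by blast
qed

lemma exists_subtree:
  "finite E \<Longrightarrow> is_graph N E \<Longrightarrow> connected_graph N E \<Longrightarrow> \<exists>T\<subseteq>E. spanning_tree N T"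
proof (induction "card E" arbitrary: E rule: less_induct)
  case less
  show ?case
  proof (cases "acyclic_graph E")
    case True
    have "spanning_tree N E" using less.prems True unfolding spanning_tree_def by simp
    thus ?thesis by blast
  next
    case False
    then obtain vs where cyc: "is_cycle E vs" unfolding acyclic_graph_def by blast
    define E' where "E' = E - {{last vs, hd vs}}"
    have mem: "{last vs, hd vs} \<in> E" using cyc unfolding is_cycle_def by simp
    have "card E' < card E" unfolding E'_def using card_Diff1_less[OF less.prems(1) mem] .
    moreover have "finite E'" using less.prems(1) E'_def by simp
    moreover have "is_graph N E'" using is_graph_sub[OF less.prems(2)] E'_def by blast
    moreover have "connected_graph N E'" using cycle_remove[OF less.prems(3) cyc] E'_def by simp
    ultimately obtain T where T: "T \<subseteq> E'" "spanning_tree N T" using less.hyps by blast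
    have "T \<subseteq> E" using T(1) unfolding E'_def by blast
    thus ?thesis using T(2) by blast
  qed
qed

lemma rho_set_finite:
  assumes "is_graph N T"
  shows "finite {phi \<gamma> i j | i j. {i, j} \<in> T \<and> i \<noteq> j}"
proof (rule finite_subset)
  show "{phi \<gamma> i j | i j. {i, j} \<in> T \<and> i \<noteq> j} \<subseteq> (\<lambda>p. phi \<gamma> (fst p) (snd p)) ` ({1..N} \<times> {1..N})"
  proof
    fix x assume "x \<in> {phi \<gamma> i j | i j. {i, j} \<in> T \<and> i \<noteq> j}"
    then obtain i j where x: "x = phi \<gamma> i j" and e: "{i,j} \<in> T" by blast
    obtain a b where ab: "{i,j} = {a,b}" "a \<in> {1..N}" "b \<in> {1..N}"
      using assms e unfolding is_graph_def by blast
    have "i \<in> {1..N}" "j \<in> {1..N}" using ab by (auto simp: doubleton_eq_iff)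
    thus "x \<in> (\<lambda>p. phi \<gamma> (fst p) (snd p)) ` ({1..N} \<times> {1..N})"
      using x by (intro image_eqI[of _ _ "(i,j)"]) auto
  qed
qed simp

lemma rho_le:
  assumes "is_graph N T" "{i,j} \<in> T" "i \<noteq> j"
  shows "rho \<gamma> T \<le> phi \<gamma> i j"
  unfolding rho_def using rho_set_finite[OF assms(1)] assms(2,3)
  by (intro Min_le) auto

lemma g_mono1:
  fixes x y c :: real
  assumes "0 < x" "x \<le> y" "0 < c"
  shows "x + x/(x+c) \<le> y + y/(y+c)"
proof -
  have "x/(x+c) \<le> y/(y+c)" using assms by (simp add: divide_simps) (simp add: algebra_simps mult_right_mono)
  thus ?thesis using assms by simp
qed

lemma g_mono2:
  fixes a b c :: real
  assumes "0 < a" "0 < b" "b \<le> c"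
  shows "a + a/(a+c) \<le> a + a/(a+b)"
  using assms by (simp add: frac_le)

lemma g_swap:
  fixes a b :: real
  assumes "0 < a" "a \<le> b"
  shows "a + a/(a+b) \<le> b + b/(b+a)"
proof -
  have "a/(a+b) \<le> b/(a+b)" using assms by (simp add: divide_right_mono)
  thus ?thesis using assms by (simp add: add.commute)
qed

lemma phi_mono:
  assumes "0 < \<gamma> i" "0 < \<gamma> j"
    and "\<gamma> i + \<gamma> i/(\<gamma> i+\<gamma> j) \<le> \<gamma> k + \<gamma> k/(\<gamma> k+\<gamma> l)"
  shows "phi \<gamma> i j \<le> phi \<gamma> k l"
proof -
  have "0 < \<gamma> i/(\<gamma> i+\<gamma> j)" using assms by simp
  hence p: "0 < \<gamma> i + \<gamma> i/(\<gamma> i+\<gamma> j)" using assms by linarith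
  show ?thesis unfolding phi_def using p assms(3) by simp
qed

theorem lemma1:
  fixes N :: nat and \<gamma> :: "nat \<Rightarrow> real"
  assumes "N \<ge> 2"
    and "\<gamma> 1 > 0"
    and "\<And>i j. 1 \<le> i \<Longrightarrow> i \<le> j \<Longrightarrow> j \<le> N \<Longrightarrow> \<gamma> i \<le> \<gamma> j"
  shows "\<exists>T. spanning_tree N T
           \<and> (\<forall>T'. spanning_tree N T' \<longrightarrow> rho \<gamma> T' \<le> rho \<gamma> T)
           \<and> {j. {1, j} \<in> T \<and> j \<noteq> 1} = {2}"
proof -
  note mono = assms(3)
  have pos: "\<And>i. 1 \<le> i \<Longrightarrow> i \<le> N \<Longrightarrow> 0 < \<gamma> i"
    using assms(2) mono by (metis le_trans less_le_trans order_refl)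
  define S where "S = {T. spanning_tree N T}"
  have Sfin: "finite S"
  proof (rule finite_subset)
    show "S \<subseteq> Pow (Pow {1..N})" unfolding S_def spanning_tree_def
      using is_graph_finite by blast
  qed simp
  define K where "K = {{i,j} | i j. i \<noteq> j \<and> i \<in> {1..N} \<and> j \<in> {1..N}}"
  have Kg: "is_graph N K" unfolding K_def is_graph_def by blast
  have Kc: "connected_graph N K" unfolding connected_graph_def
  proof (intro ballI)
    fix i j assume "i \<in> {1..N}" "j \<in> {1..N}"
    thus "(i,j) \<in> (adj K)\<^sup>*"
    proof (cases "i = j")
      case False
      hence "(i,j) \<in> adj K" using \<open>i \<in> _\<close> \<open>j \<in> _\<close> unfolding adj_def K_def by blast
      thus ?thesis by auto
    qed simp
  qed
  obtain T1 where "spanning_tree N T1"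
    using exists_subtree[OF _ Kg Kc] is_graph_finite[OF Kg] finite_subset by blast
  hence Sne: "S \<noteq> {}" unfolding S_def by blast
  define m where "m = Max (rho \<gamma> ` S)"
  have "m \<in> rho \<gamma> ` S" unfolding m_def using Sfin Sne by (intro Max_in) auto
  then obtain T0 where T0S: "T0 \<in> S" and T0m: "rho \<gamma> T0 = m" by blast
  have T0max: "rho \<gamma> T \<le> rho \<gamma> T0" if "spanning_tree N T" for T
  proof -
    have "rho \<gamma> T \<in> rho \<gamma> ` S" using that S_def by blast
    thus ?thesis using T0m Sfin unfolding m_def by (simp add: Max_ge)
  qed
  have T0g: "is_graph N T0" and T0c: "connected_graph N T0"
    using T0S unfolding S_def spanning_tree_def by auto
  have T0v: "\<And>i j. {i,j} \<in> T0 \<Longrightarrow> i \<in> {1..N} \<and> j \<in> {1..N}"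
    using T0g unfolding is_graph_def by (fastforce simp: doubleton_eq_iff)
  have "(1,2) \<in> (adj T0)\<^sup>*" using T0c assms(1) unfolding connected_graph_def by auto
  then obtain j0 where "(1,j0) \<in> adj T0"
    by (metis converse_rtranclE one_neq_zero numeral_eq_one_iff semiring_norm(85))
  hence j0: "{1,j0} \<in> T0" "j0 \<noteq> 1" unfolding adj_def by auto
  have j0r: "j0 \<in> {1..N}" using T0v[OF j0(1)] by simp
  define G where "G = {e\<in>T0. 1 \<notin> e} \<union> {{1,2}} \<union> {{2,j} | j. {1,j} \<in> T0 \<and> j \<noteq> 1 \<and> j \<noteq> 2}"
  have Gg: "is_graph N G" unfolding is_graph_def
  proof
    fix e assume "e \<in> G"
    thus "\<exists>i j. e = {i, j} \<and> i \<noteq> j \<and> i \<in> {1..N} \<and> j \<in> {1..N}"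
      unfolding G_def using T0g assms(1) T0v unfolding is_graph_def by fastforce
  qed
  have adjG: "\<And>a b. {a,b} \<in> G \<Longrightarrow> a \<noteq> b \<Longrightarrow> (a,b) \<in> adj G" unfolding adj_def by simp
  have e12: "{1,2} \<in> G" unfolding G_def by simp
  have step12: "(1,2) \<in> (adj G)\<^sup>*" using adjG[OF e12] by auto
  have step2j: "(2,j) \<in> (adj G)\<^sup>*" if "{1,j} \<in> T0" "j \<noteq> 1" for j
  proof (cases "j = 2")
    case False
    hence "{2,j} \<in> G" using that unfolding G_def by blast
    thus ?thesis using adjG False by blast
  qed simp
  have Gc: "connected_graph N G"
  proof -
    have "adj T0 \<subseteq> (adj G)\<^sup>*"
    proof
      fix p assume "p \<in> adj T0"
      then obtain a b where p: "p = (a,b)" and ab: "{a,b} \<in> T0" "a \<noteq> b"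
        unfolding adj_def by auto
      show "p \<in> (adj G)\<^sup>*"
      proof (cases "a = 1")
        case True
        hence "(2,b) \<in> (adj G)\<^sup>*" using step2j[of b] ab by auto
        hence "(1,b) \<in> (adj G)\<^sup>*" using step12 by (meson rtrancl_trans)
        thus ?thesis using p True by simp
      next
        case a1: False
        show ?thesis
        proof (cases "b = 1")
          case True
          have "{1,a} \<in> T0" using ab True by (simp add: insert_commute)
          hence "(2,a) \<in> (adj G)\<^sup>*" using step2j[of a] a1 by auto
          hence "(1,a) \<in> (adj G)\<^sup>*" using step12 by (meson rtrancl_trans)
          thus ?thesis using p True adj_sym by blast
        next
          case False
          hence "{a,b} \<in> G" using ab a1 unfolding G_def by blast
          thus ?thesis using p adjG ab by blast
        qed
      qed
    qed
    hence "(adj T0)\<^sup>* \<subseteq> (adj G)\<^sup>*" by (rule rtrancl_subset_rtrancl)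
    thus ?thesis using T0c unfolding connected_graph_def by blast
  qed
  have Gfin: "finite G" using is_graph_finite[OF Gg] finite_subset by blast
  obtain T where TG: "T \<subseteq> G" and Tsp: "spanning_tree N T"
    using exists_subtree[OF Gfin Gg Gc] by blast
  have Tg: "is_graph N T" and Tc: "connected_graph N T"
    using Tsp unfolding spanning_tree_def by auto
  have nbG: "\<And>k. {1,k} \<in> G \<Longrightarrow> k \<noteq> 1 \<Longrightarrow> k = 2"
    unfolding G_def by (auto simp: doubleton_eq_iff)
  have "(1,2) \<in> (adj T)\<^sup>*" using Tc assms(1) unfolding connected_graph_def by auto
  then obtain k where "(1,k) \<in> adj T"
    by (metis converse_rtranclE one_neq_zero numeral_eq_one_iff semiring_norm(85))
  hence k: "{1,k} \<in> T" "k \<noteq> 1" unfolding adj_def by auto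
  have "k = 2" using nbG k TG by blast
  hence e12T: "{1,2} \<in> T" using k by simp
  have nbT: "{j. {1, j} \<in> T \<and> j \<noteq> 1} = {2}"
    using e12T nbG TG by auto
  have r0: "rho \<gamma> T0 \<le> phi \<gamma> 1 j0" using rho_le[OF T0g j0(1) j0(2)[symmetric]] .
  have g1: "0 < \<gamma> 1" using assms(2) .
  have g2: "0 < \<gamma> 2" using pos assms(1) by simp
  have g12: "\<gamma> 1 \<le> \<gamma> 2" using mono assms(1) by simp
  have j02: "\<gamma> 2 \<le> \<gamma> j0" using mono j0r j0(2) by simp
  have gj0: "0 < \<gamma> j0" using pos j0r by simp
  have Gval: "rho \<gamma> T0 \<le> phi \<gamma> i j" if ij: "{i,j} \<in> G" "i \<noteq> j" for i j
  proof -
    consider (a) "{i,j} \<in> T0" "1 \<notin> {i,j}" | (b) "{i,j} = {1,2}"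
      | (c) j' where "{i,j} = {2,j'}" "{1,j'} \<in> T0" "j' \<noteq> 1" "j' \<noteq> 2"
      using ij(1) unfolding G_def by blast
    thus ?thesis
    proof cases
      case a thus ?thesis using rho_le[OF T0g a(1) ij(2)] by simp
    next
      case b
      have A: "phi \<gamma> 1 j0 \<le> phi \<gamma> 1 2"
        using g1 gj0 g2 j02 by (intro phi_mono g_mono2) auto
      have B: "phi \<gamma> 1 2 \<le> phi \<gamma> 2 1"
        using g1 g2 g12 by (intro phi_mono g_swap) auto
      have "(i = 1 \<and> j = 2) \<or> (i = 2 \<and> j = 1)" using b by (metis doubleton_eq_iff)
      thus ?thesis using A B r0 by auto
    next
      case c
      have j'r: "j' \<in> {1..N}" using T0v[OF c(2)] by simp
      have gj': "0 < \<gamma> j'" using pos j'r by simp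
      have j'2: "\<gamma> 2 \<le> \<gamma> j'" using mono j'r c(3) by simp
      have r1: "rho \<gamma> T0 \<le> phi \<gamma> 1 j'" using rho_le[OF T0g c(2) c(3)[symmetric]] .
      have A: "phi \<gamma> 1 j' \<le> phi \<gamma> 2 j'"
        using g1 gj' g12 by (intro phi_mono g_mono1) auto
      have B: "phi \<gamma> 2 j' \<le> phi \<gamma> j' 2"
        using g2 gj' j'2 by (intro phi_mono g_swap) auto
      have "(i = 2 \<and> j = j') \<or> (i = j' \<and> j = 2)" using c(1) by (metis doubleton_eq_iff)
      thus ?thesis using A B r1 by auto
    qed
  qed
  have "rho \<gamma> T0 \<le> rho \<gamma> T"
    unfolding rho_def
  proof (rule Min.boundedI)
    show "finite {phi \<gamma> i j |i j. {i, j} \<in> T \<and> i \<noteq> j}" by (rule rho_set_finite[OF Tg])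
    show "{phi \<gamma> i j |i j. {i, j} \<in> T \<and> i \<noteq> j} \<noteq> {}"
    proof -
      have "(1::nat) \<noteq> 2" by simp
      hence "phi \<gamma> 1 2 \<in> {phi \<gamma> i j |i j. {i, j} \<in> T \<and> i \<noteq> j}" using e12T by blast
      thus ?thesis by blast
    qed
    show "\<And>a. a \<in> {phi \<gamma> i j |i j. {i, j} \<in> T \<and> i \<noteq> j} \<Longrightarrow> Min {phi \<gamma> i j |i j. {i, j} \<in> T0 \<and> i \<noteq> j} \<le> a"
      using Gval TG unfolding rho_def by blast
  qed
  hence "\<forall>T'. spanning_tree N T' \<longrightarrow> rho \<gamma> T' \<le> rho \<gamma> T" using T0max by (meson order_trans)
  thus ?thesis using Tsp nbT by blast
qed

end
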